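(* Almost surely, $\lim_{n\to\infty}\frac{\bar A(B,F;n,0)}{n}=-c$. Consequently $\Lambda(0)=c$.
   Context: Let $c>0$, $q>0$, $\kappa>-1$. $F=(F(x))_{x\in\mathbb Z}$ and $B=(B(i))_{i\in\mathbb Z}$ are mutually independent families of i.i.d. random variables, $\mathbb P(B(i)=\pm1)=1/2$, and $F(x)$ has a density $\varrho$ that is even, continuous, strictly positive on $(-c,c)$, zero outside $(-c,c)$, with $\lim_{x\to c}\varrho(x)/|c-x|^{\kappa}=q$. A lazy walk satisfies $|\gamma(i+1)-\gamma(i)|\le1$; the action of a lazy walk $\gamma$ on $\{0,\dots,n\}$ is $A(B,F;\gamma)=\sum_{i=1}^nB(i)F(\gamma(i))$; $\bar A(B,F;n,k)$ is the minimal action over lazy walks from $(0,0)$ to $(n,k)$. The shape function $\Lambda$ is the deterministic function with $\bar A(B,F;n,[\alpha n])/n\to-\Lambda(\alpha)$ almost surely, $[\cdot]$ rounding towards $0$. *)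

theory Defs
  imports "HOL-Probability.Probability"
begin

definition lazy_walk :: "nat \<Rightarrow> int \<Rightarrow> (nat \<Rightarrow> int) \<Rightarrow> bool" where
  "lazy_walk n k \<gamma> \<longleftrightarrow> \<gamma> 0 = 0 \<and> \<gamma> n = k \<and> (\<forall>i<n. \<bar>\<gamma> (Suc i) - \<gamma> i\<bar> \<le> 1)"

definition action :: "(int \<Rightarrow> 'a \<Rightarrow> real) \<Rightarrow> (int \<Rightarrow> 'a \<Rightarrow> real) \<Rightarrow> 'a \<Rightarrow> nat \<Rightarrow> (nat \<Rightarrow> int) \<Rightarrow> real" where
  "action B F \<omega> n \<gamma> = (\<Sum>i=1..n. B (int i) \<omega> * F (\<gamma> i) \<omega>)"

definition min_action :: "(int \<Rightarrow> 'a \<Rightarrow> real) \<Rightarrow> (int \<Rightarrow> 'a \<Rightarrow> real) \<Rightarrow> 'a \<Rightarrow> nat \<Rightarrow> int \<Rightarrow> real" where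
  "min_action B F \<omega> n k = Inf {action B F \<omega> n \<gamma> | \<gamma>. lazy_walk n k \<gamma>}"

definition round0 :: "real \<Rightarrow> int" where
  "round0 x = (if x \<ge> 0 then \<lfloor>x\<rfloor> else \<lceil>x\<rceil>)"

text \<open>Shape function: the deterministic \<open>\<Lambda>(\<alpha>)\<close> with \<open>Abar(n,[\<alpha> n])/n \<rightarrow> -\<Lambda>(\<alpha>)\<close> a.s.\<close>
definition shape_fun :: "'a measure \<Rightarrow> (int \<Rightarrow> 'a \<Rightarrow> real) \<Rightarrow> (int \<Rightarrow> 'a \<Rightarrow> real) \<Rightarrow> real \<Rightarrow> real" where
  "shape_fun M B F \<alpha> = (THE L. AE \<omega> in M.
      (\<lambda>n. min_action B F \<omega> n (round0 (\<alpha> * real n)) / real n) \<longlonglongrightarrow> - L)"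

end

theory Submission
  imports Defs
begin


lemma action_lower:
  assumes Fb: "\<forall>x. \<bar>F x \<omega>\<bar> \<le> c" and Bpm: "\<forall>i. B i \<omega> = 1 \<or> B i \<omega> = -1"
  shows "action B F \<omega> n \<gamma> \<ge> - (real n * c)"
proof -
  have "(\<Sum>i=1..n. B (int i) \<omega> * F (\<gamma> i) \<omega>) \<ge> (\<Sum>i=1..n. - c)"
  proof (rule sum_mono)
    fix i
    have "\<bar>F (\<gamma> i) \<omega>\<bar> \<le> c" using Fb by auto
    moreover have "B (int i) \<omega> = 1 \<or> B (int i) \<omega> = -1" using Bpm by auto
    ultimately show "- c \<le> B (int i) \<omega> * F (\<gamma> i) \<omega>" by auto
  qed
  then show ?thesis by (simp add: action_def)
qed

lemma min_action_bounds:
  assumes Fb: "\<forall>x. \<bar>F x \<omega>\<bar> \<le> c" and Bpm: "\<forall>i. B i \<omega> = 1 \<or> B i \<omega> = -1"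
  shows "min_action B F \<omega> n 0 \<ge> - (real n * c)"
    and "lazy_walk n 0 \<gamma> \<Longrightarrow> min_action B F \<omega> n 0 \<le> action B F \<omega> n \<gamma>"
proof -
  let ?S = "{action B F \<omega> n \<gamma> | \<gamma>. lazy_walk n 0 \<gamma>}"
  have ne: "?S \<noteq> {}" using lazy_walk_def[of n 0 "\<lambda>_. 0"] by auto
  have lb0: "\<And>\<gamma>. action B F \<omega> n \<gamma> \<ge> - (real n * c)"
    by (rule action_lower) (fact Fb Bpm)+
  have lb: "\<forall>s\<in>?S. s \<ge> - (real n * c)" using lb0 by auto
  show "min_action B F \<omega> n 0 \<ge> - (real n * c)" unfolding min_action_def
    using ne lb by (intro cInf_greatest) auto
  assume "lazy_walk n 0 \<gamma>"
  then have "action B F \<omega> n \<gamma> \<in> ?S" by auto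
  moreover have "bdd_below ?S" using lb by (auto simp: bdd_below_def)
  ultimately show "min_action B F \<omega> n 0 \<le> action B F \<omega> n \<gamma>" unfolding min_action_def
    by (rule cInf_lower)
qed

lemma walk_upper:
  fixes x n :: nat
  assumes Fb: "\<forall>x. \<bar>F x \<omega>\<bar> \<le> c" and Bpm: "\<forall>i. B i \<omega> = 1 \<or> B i \<omega> = -1"
    and px: "F (int x) \<omega> > a" and px1: "F (int x + 1) \<omega> < - a"
    and n: "n \<ge> 2*x+2"
  shows "min_action B F \<omega> n 0 \<le> real n * c - (c + a) * (real n - real (2*x+1))"
proof -
  define \<gamma> where "\<gamma> i = int (if i \<le> x then i else if n - x \<le> i then n - i
      else if B (int i) \<omega> = 1 then x+1 else x)" for i
  have lw: "lazy_walk n 0 \<gamma>"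
    unfolding lazy_walk_def
  proof (intro conjI allI impI)
    show "\<gamma> 0 = 0" by (simp add: \<gamma>_def)
    show "\<gamma> n = 0" using n by (simp add: \<gamma>_def)
    fix i assume "i < n"
    then show "\<bar>\<gamma> (Suc i) - \<gamma> i\<bar> \<le> 1" using n
      unfolding \<gamma>_def by (auto split: if_splits)
  qed
  define g where "g i = c - (if i \<in> {x+1..<n-x} then c + a else 0)" for i
  have "action B F \<omega> n \<gamma> \<le> (\<Sum>i=1..n. g i)"
    unfolding action_def
  proof (rule sum_mono)
    fix i assume i: "i \<in> {1..n}"
    have b1: "\<bar>F (\<gamma> i) \<omega>\<bar> \<le> c" using Fb by auto
    have b2: "B (int i) \<omega> = 1 \<or> B (int i) \<omega> = -1" using Bpm by auto
    show "B (int i) \<omega> * F (\<gamma> i) \<omega> \<le> g i"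
    proof (cases "i \<in> {x+1..<n-x}")
      case True
      then have "\<gamma> i = (if B (int i) \<omega> = 1 then int x + 1 else int x)"
        by (auto simp: \<gamma>_def)
      then show ?thesis using True b2 px px1 by (auto simp: g_def)
    next
      case False
      then show ?thesis using b1 b2 by (auto simp: g_def)
    qed
  qed
  also have "(\<Sum>i=1..n. g i) = real n * c - (c + a) * real (card ({1..n} \<inter> {x+1..<n-x}))"
  proof -
    have "(\<Sum>i=1..n. (if i \<in> {x+1..<n-x} then c + a else 0)) = (\<Sum>i\<in>{1..n} \<inter> {x+1..<n-x}. c + a)"
      by (simp only: sum.inter_restrict[symmetric, OF finite_atLeastAtMost])
    then show ?thesis unfolding g_def by (simp only: sum_subtractf) simp
  qed
  also have "{1..n} \<inter> {x+1..<n-x} = {x+1..<n-x}" by auto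
  also have "real (card {x+1..<n-x}) = real n - real (2*x+1)" using n by simp
  finally have "action B F \<omega> n \<gamma> \<le> real n * c - (c + a) * (real n - real (2*x+1))" .
  with min_action_bounds(2)[where F=F and B=B and \<omega>=\<omega> and c=c, OF Fb Bpm lw] show ?thesis by linarith
qed

lemma det_limit:
  fixes B F :: "int \<Rightarrow> 'a \<Rightarrow> real"
  assumes c: "c > 0" and Fb: "\<forall>x. \<bar>F x \<omega>\<bar> \<le> c" and Bpm: "\<forall>i. B i \<omega> = 1 \<or> B i \<omega> = -1"
    and pairs: "\<forall>a. a < c \<longrightarrow> (\<exists>x::nat. F (int x) \<omega> > a \<and> F (int x + 1) \<omega> < - a)"
  shows "(\<lambda>n. min_action B F \<omega> n 0 / real n) \<longlonglongrightarrow> - c"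
proof (rule order_tendstoI)
  fix l assume l: "l < - c"
  show "\<forall>\<^sub>F n in sequentially. l < min_action B F \<omega> n 0 / real n"
    using eventually_ge_at_top[of "1::nat"]
  proof (rule eventually_mono)
    fix n :: nat assume "1 \<le> n"
    then have "min_action B F \<omega> n 0 / real n \<ge> - c"
      using min_action_bounds(1)[where F=F and B=B and \<omega>=\<omega> and c=c and n=n, OF Fb Bpm] by (simp add: field_simps)
    then show "l < min_action B F \<omega> n 0 / real n" using l by linarith
  qed
next
  fix u assume u: "- c < u"
  define a where "a = (c - u) / 2"
  have ac: "a < c" and au: "- a < u" using u unfolding a_def by (simp_all add: field_simps)
  obtain x :: nat where px: "F (int x) \<omega> > a" and px1: "F (int x + 1) \<omega> < - a"
    using pairs ac by blast
  define h where "h n = c - (c + a) * (1 - real (2*x+1) / real n)" for n :: nat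
  have "h \<longlonglongrightarrow> c - (c + a) * (1 - 0)"
    unfolding h_def
    by (intro tendsto_intros tendsto_divide_0[OF tendsto_const] filterlim_real_sequentially)
  then have "h \<longlonglongrightarrow> - a" by simp
  then have ev: "\<forall>\<^sub>F n in sequentially. h n < u" using au by (rule order_tendstoD)
  show "\<forall>\<^sub>F n in sequentially. min_action B F \<omega> n 0 / real n < u"
    using eventually_conj[OF ev eventually_ge_at_top[of "2*x+2"]]
  proof (rule eventually_mono)
    fix n assume *: "h n < u \<and> 2*x+2 \<le> n"
    then have np: "real n > 0" by auto
    have "min_action B F \<omega> n 0 \<le> real n * c - (c + a) * (real n - real (2*x+1))"
      using walk_upper[where F=F and B=B and \<omega>=\<omega> and c=c, OF Fb Bpm px px1] * by auto
    then have "min_action B F \<omega> n 0 / real n \<le> (real n * c - (c + a) * (real n - real (2*x+1))) / real n"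
      using np by (simp add: divide_right_mono)
    also have "\<dots> = h n" unfolding h_def using np by (simp add: field_simps)
    finally show "min_action B F \<omega> n 0 / real n < u" using * by linarith
  qed
qed



lemma density_pos:
  fixes \<rho> :: "real \<Rightarrow> real"
  assumes meas: "(\<lambda>t. ennreal (\<rho> t)) \<in> borel_measurable lborel"
    and pos: "\<And>t. t \<in> {u<..<v} \<Longrightarrow> \<rho> t > 0" and uv: "u < v"
    and sub: "{u<..<v} \<subseteq> A" and A: "A \<in> sets borel"
  shows "emeasure (density lborel (\<lambda>t. ennreal (\<rho> t))) A \<noteq> 0"
proof
  assume "emeasure (density lborel (\<lambda>t. ennreal (\<rho> t))) A = 0"
  then have "(\<integral>\<^sup>+ t. ennreal (\<rho> t) * indicator A t \<partial>lborel) = 0"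
    using A meas by (simp add: emeasure_density)
  then have "AE t in lborel. ennreal (\<rho> t) * indicator A t = 0"
    using A meas by (subst (asm) nn_integral_0_iff_AE) auto
  then have "AE t in lborel. t \<notin> {u<..<v}"
  proof (rule AE_mp[OF _ AE_I2], intro impI)
    fix t assume "ennreal (\<rho> t) * indicator A t = 0"
    then show "t \<notin> {u<..<v}" using pos[of t] sub by (auto split: split_indicator)
  qed
  then have "emeasure lborel {u<..<v} = 0"
    by (subst (asm) AE_iff_measurable[of "{u<..<v}"]) auto
  with uv show False by simp
qed

theorem lemma3p5:
  fixes M :: "'a measure" and B F :: "int \<Rightarrow> 'a \<Rightarrow> real"
    and \<rho> :: "real \<Rightarrow> real" and c q \<kappa> :: real
  assumes "prob_space M"
    and "c > 0" and "q > 0" and "\<kappa> > -1"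
    and "\<And>x. F x \<in> borel_measurable M"
    and "\<And>i. B i \<in> borel_measurable M"
    and "prob_space.indep_vars M (\<lambda>_. borel)
           (\<lambda>j. case j of Inl x \<Rightarrow> F x | Inr i \<Rightarrow> B i) (UNIV :: (int + int) set)"
    and "\<And>i. measure M {\<omega> \<in> space M. B i \<omega> = 1} = 1/2"
    and "\<And>i. measure M {\<omega> \<in> space M. B i \<omega> = -1} = 1/2"
    and "\<And>x. distributed M lborel (F x) (\<lambda>t. ennreal (\<rho> t))"
    and "\<And>t. \<rho> (- t) = \<rho> t"
    and "continuous_on {-c<..<c} \<rho>"
    and "\<And>t. t \<in> {-c<..<c} \<Longrightarrow> \<rho> t > 0"
    and "\<And>t. t \<notin> {-c<..<c} \<Longrightarrow> \<rho> t = 0"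
    and "((\<lambda>t. \<rho> t / \<bar>c - t\<bar> powr \<kappa>) \<longlongrightarrow> q) (at_left c)"
  shows "(AE \<omega> in M. (\<lambda>n. min_action B F \<omega> n 0 / real n) \<longlonglongrightarrow> - c)
         \<and> shape_fun M B F 0 = c"
proof -
  interpret P: prob_space M by (rule assms(1))
  note c = assms(2)
  note indep = assms(7)
  define D where "D = density lborel (\<lambda>t. ennreal (\<rho> t))"
  have distF: "distr M lborel (F x) = D" and Fmeas: "F x \<in> measurable M lborel"
    and rmeas: "(\<lambda>t. ennreal (\<rho> t)) \<in> borel_measurable lborel" for x
    using assms(10)[of x] unfolding distributed_def D_def by auto
  have Fm[measurable]: "F x \<in> borel_measurable M" for x using assms(5) .
  have Bm[measurable]: "B i \<in> borel_measurable M" for i using assms(6) .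
  interpret D: prob_space D using P.prob_space_distr[OF Fmeas[of 0]] distF[of 0] by simp
  have probF: "P.prob (F y -` S \<inter> space M) = measure D S" if "S \<in> sets borel" for y S
    using measure_distr[OF Fmeas[of y], of S] that distF[of y] by simp
  have Dpos: "measure D A > 0" if "\<And>t. t \<in> {u<..<v} \<Longrightarrow> \<rho> t > 0" "u < v"
     "{u<..<v} \<subseteq> A" "A \<in> sets borel" for u v A
  proof -
    have "emeasure D A \<noteq> 0" unfolding D_def
      by (rule density_pos[OF rmeas that])
    then have "measure D A \<noteq> 0" by (simp add: D.emeasure_eq_measure)
    then show ?thesis using measure_nonneg[of D A] by linarith
  qed

  have AEF: "AE \<omega> in M. \<forall>x. \<bar>F x \<omega>\<bar> \<le> c"
  proof (subst AE_all_countable, intro allI)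
    fix x
    have "AE t in D. \<bar>t\<bar> \<le> c" unfolding D_def
    proof (subst AE_density[OF rmeas], rule AE_I2, intro impI)
      fix t assume "0 < ennreal (\<rho> t)"
      then have "\<rho> t \<noteq> 0" by auto
      then have "t \<in> {-c<..<c}" using assms(14) by blast
      then show "\<bar>t\<bar> \<le> c" by auto
    qed
    then have "AE t in distr M lborel (F x). \<bar>t\<bar> \<le> c" by (simp only: distF)
    then show "AE \<omega> in M. \<bar>F x \<omega>\<bar> \<le> c" by (rule AE_distrD[OF Fmeas])
  qed

  have AEB: "AE \<omega> in M. \<forall>i. B i \<omega> = 1 \<or> B i \<omega> = -1"
  proof (subst AE_all_countable, intro allI)
    fix i
    have "{\<omega> \<in> space M. B i \<omega> = 1 \<or> B i \<omega> = -1} =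
      {\<omega> \<in> space M. B i \<omega> = 1} \<union> {\<omega> \<in> space M. B i \<omega> = -1}" by auto
    moreover have "P.prob ({\<omega> \<in> space M. B i \<omega> = 1} \<union> {\<omega> \<in> space M. B i \<omega> = -1}) = 1"
      by (subst P.finite_measure_Union) (auto simp: assms(8,9))
    ultimately have "P.prob {\<omega> \<in> space M. B i \<omega> = 1 \<or> B i \<omega> = -1} = 1" by simp
    then have "AE \<omega> in M. \<omega> \<in> {\<omega> \<in> space M. B i \<omega> = 1 \<or> B i \<omega> = -1}"
      by (rule P.AE_prob_1)
    then show "AE \<omega> in M. B i \<omega> = 1 \<or> B i \<omega> = -1" by (rule AE_mp) (auto intro: AE_I2)
  qed

  have AEpair: "AE \<omega> in M. \<exists>x::nat. F (int x) \<omega> > a \<and> F (int x + 1) \<omega> < - a" if ac: "a < c" for a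
  proof -
    define b where "b = max a 0"
    have bc: "b < c" and ab: "a \<le> b" and b0: "0 \<le> b" using ac c by (auto simp: b_def)
    define q1 where "q1 = measure D {a<..}"
    define q2 where "q2 = measure D {..< -a}"
    have q1: "q1 > 0" unfolding q1_def
      by (rule Dpos[of b c]) (use bc ab b0 assms(13) in auto)
    have q2: "q2 > 0" unfolding q2_def
      by (rule Dpos[of "-c" "-b"]) (use bc ab b0 assms(13) in auto)
    have q1le: "q1 \<le> 1" and q2le: "q2 \<le> 1" unfolding q1_def q2_def by (auto intro: D.prob_le_1)
    define p where "p = q1 * q2"
    have p0: "0 < p" and p1: "p \<le> 1" unfolding p_def using q1 q2 q1le q2le
      by (auto simp: mult_le_one)
    define E where "E k = (F (int (2*k)) -` {a<..} \<inter> space M) \<inter> (F (int (2*k) + 1) -` {..< -a} \<inter> space M)" for k :: nat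
    have Eev: "E k \<in> P.events" for k unfolding E_def
      by (intro sets.Int measurable_sets[OF Fm]) auto
    have probE: "P.prob (E k) = p" for k
    proof -
      let ?X = "\<lambda>j. case j of Inl x \<Rightarrow> F x | Inr i \<Rightarrow> B i"
      let ?J = "{Inl (int (2*k)), Inl (int (2*k) + 1)} :: (int + int) set"
      let ?A = "\<lambda>j::int+int. if j = Inl (int (2*k)) then {a<..} else {..< -a} :: real set"
      have "P.prob (\<Inter>j\<in>?J. ?X j -` ?A j \<inter> space M) = (\<Prod>j\<in>?J. P.prob (?X j -` ?A j \<inter> space M))"
        by (rule P.indep_varsD[OF indep]) auto
      then show ?thesis unfolding E_def p_def q1_def q2_def
        by (simp add: probF)
    qed
    define K :: "nat \<Rightarrow> (int + int) set" where "K k = {Inl (int (2*k)), Inl (int (2*k) + 1)}" for k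
    have ind2: "P.indep_vars (\<lambda>k. PiM (K k) (\<lambda>_. borel))
        (\<lambda>k \<omega>. restrict (\<lambda>i. (case i of Inl x \<Rightarrow> F x | Inr i \<Rightarrow> B i) \<omega>) (K k)) UNIV"
      by (rule P.indep_vars_restrict[OF indep]) (auto simp: K_def disjoint_family_on_def)
    have "P.indep_events (\<lambda>k. {\<omega> \<in> space M. (\<lambda>k f. \<not> (a < f (Inl (int (2*k))) \<and> f (Inl (int (2*k) + 1)) < - a)) k
        (restrict (\<lambda>i. (case i of Inl x \<Rightarrow> F x | Inr i \<Rightarrow> B i) \<omega>) (K k))}) UNIV"
    proof (rule P.indep_eventsI_indep_vars[OF ind2])
      fix k :: nat
      have m1[measurable]: "(\<lambda>f. f (Inl (int (2*k)))) \<in> borel_measurable (PiM (K k) (\<lambda>_. borel))"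
        by (rule measurable_component_singleton) (simp add: K_def)
      have m2[measurable]: "(\<lambda>f. f (Inl (int (2*k) + 1))) \<in> borel_measurable (PiM (K k) (\<lambda>_. borel))"
        by (rule measurable_component_singleton) (simp add: K_def)
      show "{f \<in> space (PiM (K k) (\<lambda>_. borel)). \<not> (a < f (Inl (int (2*k))) \<and> f (Inl (int (2*k) + 1)) < - a)}
          \<in> sets (PiM (K k) (\<lambda>_. borel))"
        by measurable
    qed
    moreover have "{\<omega> \<in> space M. (\<lambda>k f. \<not> (a < f (Inl (int (2*k))) \<and> f (Inl (int (2*k) + 1)) < - a)) k
        (restrict (\<lambda>i. (case i of Inl x \<Rightarrow> F x | Inr i \<Rightarrow> B i) \<omega>) (K k))} = space M - E k" for k
      by (auto simp: K_def E_def)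
    ultimately have indE: "P.indep_events (\<lambda>k. space M - E k) UNIV" by simp
    define G where "G = (\<Inter>k. space M - E k)"
    have Gev: "G \<in> P.events" unfolding G_def using Eev by auto
    have Gle: "P.prob G \<le> (1 - p) ^ N" for N
    proof (cases "N = 0")
      case True then show ?thesis by simp
    next
      case False
      have "P.prob G \<le> P.prob (\<Inter>k\<in>{0..<N}. space M - E k)"
        using Eev False unfolding G_def by (intro P.finite_measure_mono) auto
      also have "\<dots> = (\<Prod>k\<in>{0..<N}. P.prob (space M - E k))"
        using indE False unfolding P.indep_events_def by auto
      also have "\<dots> = (1 - p) ^ N" using Eev by (simp add: P.prob_compl probE)
      finally show ?thesis .
    qed
    have "(\<lambda>N. (1 - p) ^ N) \<longlonglongrightarrow> 0" using p0 p1 by (intro LIMSEQ_power_zero) auto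
    then have "P.prob G \<le> 0" using Gle by (intro LIMSEQ_le_const) auto
    then have "P.prob G = 0" using measure_nonneg[of M G] by linarith
    then have "emeasure M G = 0" by (simp add: P.emeasure_eq_measure)
    then have "AE \<omega> in M. \<omega> \<notin> G"
      using Gev by (subst AE_iff_measurable[of G]) (auto simp: G_def)
    then show ?thesis
    proof (rule AE_mp[OF _ AE_I2], intro impI)
      fix \<omega> assume "\<omega> \<in> space M" "\<omega> \<notin> G"
      then obtain k where "\<omega> \<in> E k" unfolding G_def by auto
      then show "\<exists>x::nat. F (int x) \<omega> > a \<and> F (int x + 1) \<omega> < - a"
        by (intro exI[of _ "2*k"]) (auto simp: E_def)
    qed
  qed
  have AEQ: "AE \<omega> in M. \<forall>r::rat. real_of_rat r < c \<longrightarrow>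
      (\<exists>x::nat. F (int x) \<omega> > real_of_rat r \<and> F (int x + 1) \<omega> < - real_of_rat r)"
  proof (subst AE_all_countable, intro allI)
    fix r :: rat
    show "AE \<omega> in M. real_of_rat r < c \<longrightarrow>
      (\<exists>x::nat. F (int x) \<omega> > real_of_rat r \<and> F (int x + 1) \<omega> < - real_of_rat r)"
      using AEpair[of "real_of_rat r"] by (cases "real_of_rat r < c") auto
  qed
  have main: "AE \<omega> in M. (\<lambda>n. min_action B F \<omega> n 0 / real n) \<longlonglongrightarrow> - c"
    using AEF AEB AEQ
  proof (eventually_elim)
    case (elim \<omega>)
    have pairs: "\<forall>a. a < c \<longrightarrow> (\<exists>x::nat. F (int x) \<omega> > a \<and> F (int x + 1) \<omega> < - a)"
    proof (intro allI impI)
      fix a assume "a < c"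
      then obtain r :: rat where r: "a < real_of_rat r" "real_of_rat r < c"
        using of_rat_dense by blast
      then obtain x :: nat where "F (int x) \<omega> > real_of_rat r" "F (int x + 1) \<omega> < - real_of_rat r"
        using elim(3) by blast
      then show "\<exists>x::nat. F (int x) \<omega> > a \<and> F (int x + 1) \<omega> < - a" using r
        by (intro exI[of _ x]) auto
    qed
    show ?case by (rule det_limit[where F=F and B=B and \<omega>=\<omega> and c=c, OF c elim(1) elim(2) pairs])
  qed
  have "shape_fun M B F 0 = c"
    unfolding shape_fun_def
  proof (rule the_equality)
    show "AE \<omega> in M. (\<lambda>n. min_action B F \<omega> n (round0 (0 * real n)) / real n) \<longlonglongrightarrow> - c"
      using main by (simp add: round0_def)
  next
    fix L assume "AE \<omega> in M. (\<lambda>n. min_action B F \<omega> n (round0 (0 * real n)) / real n) \<longlonglongrightarrow> - L"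
    then have "AE \<omega> in M. (\<lambda>n. min_action B F \<omega> n 0 / real n) \<longlonglongrightarrow> - L"
      by (simp add: round0_def)
    with main have "AE \<omega> in M. - L = - c"
      by eventually_elim (rule LIMSEQ_unique)
    then show "L = c" by simp
  qed
  with main show ?thesis by simp
qed

end
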